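(* Let $a,d$ be real numbers and let $A_{n,k}(a,d)$ be the general Eulerian numbers defined below. Then for all integers $n\ge 1$ and $m\ge 1$, $$\sum_{i=1}^m (a+(i-1)d)^n=\sum_{j=-1}^{n-1}A_{n,j}(a,d)\binom{m+j+1}{n+1}.$$
   Context: For real numbers $a,d$, the general Eulerian numbers $A_{n,k}(a,d)$ (integers $n\ge 0$, $k$) are defined by $A_{0,-1}(a,d)=1$, $A_{n,k}(a,d)=0$ whenever $k\ge n$ or $k\le -2$ (in particular $A_{0,k}=0$ for $k\neq -1$), and for $n\ge 1$, $-1\le k\le n-1$: $$A_{n,k}(a,d)=(-a+(k+2)d)A_{n-1,k}(a,d)+(a+(n-k-1)d)A_{n-1,k-1}(a,d).$$ For a nonnegative integer $x$ and $n\ge 0$, $\binom{x}{n}=x(x-1)\cdots(x-n+1)/n!$ (so it is $0$ when $x<n$). *)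

theory Defs
  imports Complex_Main
begin

fun genEuler :: "real \<Rightarrow> real \<Rightarrow> nat \<Rightarrow> int \<Rightarrow> real" where
  "genEuler a d 0 k = (if k = -1 then 1 else 0)"
| "genEuler a d (Suc n) k =
     (if k \<ge> int (Suc n) \<or> k \<le> -2 then 0
      else (- a + of_int (k + 2) * d) * genEuler a d n k
         + (a + of_int (int (Suc n) - k - 1) * d) * genEuler a d n (k - 1))"

end

theory Submission
  imports Defs
begin

lemma gE_zero: "k \<le> -2 \<or> k \<ge> int n \<Longrightarrow> genEuler a d n k = 0"
  by (cases n) auto

definition E :: "real \<Rightarrow> real \<Rightarrow> nat \<Rightarrow> nat \<Rightarrow> real" where
  "E a d n k = genEuler a d n (int k - 1)"

lemma E0: "E a d 0 k = (if k = 0 then 1 else 0)"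
  by (simp add: E_def)

lemma Ebig: "k > n \<Longrightarrow> E a d n k = 0"
  unfolding E_def by (rule gE_zero) auto

lemma Erec: "k \<le> Suc n \<Longrightarrow> E a d (Suc n) k =
   (- a + (real k + 1) * d) * E a d n k
   + (a + (real n + 1 - real k) * d) * (if k = 0 then 0 else E a d n (k - 1))"
proof -
  assume k: "k \<le> Suc n"
  have g: "genEuler a d n (int k - 2) = (if k = 0 then 0 else E a d n (k - 1))"
    using gE_zero[of "int k - 2" n a d] by (cases k) (auto simp: E_def)
  show ?thesis using k unfolding E_def
    by (simp add: g algebra_simps)
qed

lemma B1: "real (Suc n) * real (Suc y choose Suc n) = real (Suc y) * real (y choose n)"
proof -
  have "Suc n * (Suc y choose Suc n) = Suc y * (y choose n)"
    using Suc_times_binomial by simp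
  then show ?thesis by (metis of_nat_mult)
qed

lemma B2: "real (Suc n) * real (y choose Suc n) = (real y - real n) * real (y choose n)"
proof -
  have p: "real (Suc y choose Suc n) = real (y choose Suc n) + real (y choose n)" by simp
  from B1[of n y] p show ?thesis by (simp add: algebra_simps)
qed

lemma key: "(a + real x * d) * real ((x + k) choose n)
   = (a + (real n - real k) * d) * real (Suc (x + k) choose Suc n)
   + (- a + (real k + 1) * d) * real ((x + k) choose Suc n)"
proof -
  let ?C = "real ((x + k) choose n)"
  have "real (Suc n) * ((a + (real n - real k) * d) * real (Suc (x + k) choose Suc n)
   + (- a + (real k + 1) * d) * real ((x + k) choose Suc n))
   = (a + (real n - real k) * d) * (real (Suc n) * real (Suc (x + k) choose Suc n))
   + (- a + (real k + 1) * d) * (real (Suc n) * real ((x + k) choose Suc n))"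
    by (simp only: distrib_left mult.left_commute)
  also have "\<dots> = (a + (real n - real k) * d) * (real (Suc (x+k)) * ?C)
   + (- a + (real k + 1) * d) * ((real (x+k) - real n) * ?C)"
    by (subst B1, subst B2, rule refl)
  also have "\<dots> = real (Suc n) * ((a + real x * d) * ?C)"
    by (simp add: algebra_simps)
  finally show ?thesis by (simp del: of_nat_Suc)
qed

lemma W: "(a + real x * d) ^ n = (\<Sum>k=0..n. E a d n k * real ((x + k) choose n))"
proof (induction n)
  case 0
  then show ?case by (simp add: E0)
next
  case (Suc n)
  let ?al = "\<lambda>k. a + (real n - real k) * d"
  let ?be = "\<lambda>k. - a + (real k + 1) * d"
  have "(a + real x * d) ^ Suc n = (a + real x * d) * (a + real x * d) ^ n" by simp
  also have "\<dots> = (a + real x * d) * (\<Sum>k=0..n. E a d n k * real ((x + k) choose n))"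
    by (simp only: Suc.IH)
  also have "\<dots> = (\<Sum>k=0..n. E a d n k * ((a + real x * d) * real ((x + k) choose n)))"
    by (simp add: sum_distrib_left mult.left_commute)
  also have "\<dots> = (\<Sum>k=0..n. ?al k * E a d n k * real (Suc (x + k) choose Suc n)
       + ?be k * E a d n k * real ((x + k) choose Suc n))"
    by (rule sum.cong[OF refl]) (subst key, simp add: algebra_simps)
  also have "\<dots> = (\<Sum>k=0..n. ?al k * E a d n k * real (Suc (x + k) choose Suc n))
       + (\<Sum>k=0..n. ?be k * E a d n k * real ((x + k) choose Suc n))"
    by (rule sum.distrib)
  also have "(\<Sum>k=0..n. ?be k * E a d n k * real ((x + k) choose Suc n))
      = (\<Sum>k=0..Suc n. ?be k * E a d n k * real ((x + k) choose Suc n))"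
    by (simp add: Ebig)
  also have "(\<Sum>k=0..n. ?al k * E a d n k * real (Suc (x + k) choose Suc n))
      = (\<Sum>k=0..Suc n. (a + (real n + 1 - real k) * d) * (if k = 0 then 0 else E a d n (k - 1))
             * real ((x + k) choose Suc n))"
    by (subst sum.atLeast0_atMost_Suc_shift) (simp add: algebra_simps)
  also have "(\<Sum>k=0..Suc n. (a + (real n + 1 - real k) * d) * (if k = 0 then 0 else E a d n (k - 1))
             * real ((x + k) choose Suc n))
      + (\<Sum>k=0..Suc n. ?be k * E a d n k * real ((x + k) choose Suc n))
      = (\<Sum>k=0..Suc n. E a d (Suc n) k * real ((x + k) choose Suc n))"
    by (simp add: sum.distrib[symmetric] Erec algebra_simps)
  finally show ?case .
qed

lemma S: "(\<Sum>i=1..m. (a + (real i - 1) * d) ^ n) = (\<Sum>k=0..n. E a d n k * real ((m + k) choose Suc n))"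
proof (induction m)
  case 0
  then show ?case by (auto intro!: sum.neutral simp: binomial_eq_0)
next
  case (Suc m)
  have "(\<Sum>i=1..Suc m. (a + (real i - 1) * d) ^ n)
     = (\<Sum>i=1..m. (a + (real i - 1) * d) ^ n) + (a + real m * d) ^ n" by simp
  also have "\<dots> = (\<Sum>k=0..n. E a d n k * real ((m + k) choose Suc n)) + (\<Sum>k=0..n. E a d n k * real ((m + k) choose n))"
    by (simp only: Suc.IH W)
  also have "\<dots> = (\<Sum>k=0..n. E a d n k * (real ((m + k) choose Suc n) + real ((m + k) choose n)))"
    by (simp only: sum.distrib[symmetric] distrib_left)
  also have "\<dots> = (\<Sum>k=0..n. E a d n k * real ((Suc m + k) choose Suc n))"
    by (simp add: add.commute)
  finally show ?case .
qed

theorem lemma2p4: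
  fixes a d :: real and n m :: nat
  assumes "n \<ge> 1" and "m \<ge> 1"
  shows "(\<Sum>i=1..m. (a + (real i - 1) * d) ^ n)
       = (\<Sum>j=-1..int n - 1. genEuler a d n j * real (nat (int m + j + 1) choose (n + 1)))"
proof -
  have im: "{-1..int n - 1} = (\<lambda>k. int k - 1) ` {0..n}"
  proof
    show "{-1..int n - 1} \<subseteq> (\<lambda>k. int k - 1) ` {0..n}"
    proof
      fix j assume "j \<in> {-1..int n - 1}"
      then have "j = int (nat (j+1)) - 1" "nat (j+1) \<in> {0..n}" by auto
      then show "j \<in> (\<lambda>k. int k - 1) ` {0..n}" by blast
    qed
  qed auto
  have inj: "inj_on (\<lambda>k::nat. int k - 1) {0..n}" by (auto simp: inj_on_def)
  have "(\<Sum>j=-1..int n - 1. genEuler a d n j * real (nat (int m + j + 1) choose (n + 1)))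
      = (\<Sum>k=0..n. E a d n k * real ((m + k) choose Suc n))"
    unfolding im by (simp add: sum.reindex[OF inj] E_def nat_add_distrib)
  then show ?thesis using S[of a d n m] by linarith
qed

end
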